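(* Let $\lambda>0$, let $\mathbf r_\lambda\in\mathfrak R$ be any point at which $f+\lambda g$ attains its minimum over $\mathfrak R$, and let $\mathbf r_\lambda(t)$, $t\ge0$, be the uniformly rotating trajectory generated by it (defined in the context). Then $f(\mathbf r_\lambda(t))=f_\lambda$ and $g(\mathbf r_\lambda(t))=g_\lambda$ are constant in $t$ and $$f_\lambda=\frac{C(\mathbf m)}{\sqrt{g_\lambda}}.$$
   Context: Fix $N\ge 2$, masses $\mathbf m=(m_1,\dots,m_N)$, $m_i>0$, and $\gamma>0$. Planar configuration space $\mathfrak R=\{\mathbf r=(\mathbf r_1,\dots,\mathbf r_N)\in(\mathbb R^2)^N:\ \mathbf r_i\neq\mathbf r_j \text{ for } i\neq j\}$; $f(\mathbf r)=\sum_{i<j}\frac{\gamma m_im_j}{|\mathbf r_j-\mathbf r_i|}$, $g(\mathbf r)=\sum_i m_i|\mathbf r_i|^2$. Let $C(\mathbf m)=\min\{f(\mathbf r):\mathbf r\in\mathfrak R,\ g(\mathbf r)=1\}$, so that $\min\{f(\mathbf r): g(\mathbf r)=g\}=C(\mathbf m)/\sqrt g$ for all $g>0$. For $\lambda>0$ and a minimizer $\mathbf r_\lambda=(\mathbf r_{1\lambda},\dots,\mathbf r_{N\lambda})$ of $f+\lambda g$ on $\mathfrak R$, writing $\mathbf r_{i\lambda}=|\mathbf r_{i\lambda}|(\cos\varphi_{i\lambda},\sin\varphi_{i\lambda})$ and $\omega=\sqrt{2\lambda}$, the generated trajectory is $\mathbf r_\lambda(t)=(\mathbf r_{1\lambda}(t),\dots,\mathbf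 r_{N\lambda}(t))$ with $\mathbf r_{i\lambda}(t)=|\mathbf r_{i\lambda}|(\cos(\varphi_{i\lambda}+\omega t),\sin(\varphi_{i\lambda}+\omega t))$; it solves $m_i\ddot{\mathbf r}_i=\sum_{j\ne i}\gamma m_im_j(\mathbf r_j-\mathbf r_i)/|\mathbf r_j-\mathbf r_i|^3$. *)

theory Defs
  imports Complex_Main
begin

text \<open>Planar configurations: the plane R^2 is identified with the complex numbers;
  bodies are indexed by 0..<N.\<close>

definition config :: "nat \<Rightarrow> (nat \<Rightarrow> complex) \<Rightarrow> bool" where
  "config N r \<longleftrightarrow> (\<forall>i<N. \<forall>j<N. i \<noteq> j \<longrightarrow> r i \<noteq> r j)"

definition fpot :: "real \<Rightarrow> (nat \<Rightarrow> real) \<Rightarrow> nat \<Rightarrow> (nat \<Rightarrow> complex) \<Rightarrow> real" where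
  "fpot \<gamma> m N r = (\<Sum>i<N. \<Sum>j<N. if i < j then \<gamma> * m i * m j / cmod (r j - r i) else 0)"

definition gmom :: "(nat \<Rightarrow> real) \<Rightarrow> nat \<Rightarrow> (nat \<Rightarrow> complex) \<Rightarrow> real" where
  "gmom m N r = (\<Sum>i<N. m i * (cmod (r i))\<^sup>2)"

text \<open>C(m) = min of f on the sphere g = 1 (written as an infimum; it is attained).\<close>
definition Cm :: "real \<Rightarrow> (nat \<Rightarrow> real) \<Rightarrow> nat \<Rightarrow> real" where
  "Cm \<gamma> m N = Inf (fpot \<gamma> m N ` {r. config N r \<and> gmom m N r = 1})"

definition traj :: "real \<Rightarrow> (nat \<Rightarrow> complex) \<Rightarrow> real \<Rightarrow> nat \<Rightarrow> complex" where
  "traj lam r t = (\<lambda>i. complex_of_real (cmod (r i)) * cis (Arg (r i) + sqrt (2 * lam) * t))"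

end

theory Submission
  imports Defs
begin

lemma config_scale:
  assumes "config N r" "c \<noteq> 0"
  shows "config N (\<lambda>i. c * r i)"
  using assms unfolding config_def by auto

lemma fpot_scale:
  assumes "c \<noteq> 0"
  shows "fpot \<gamma> m N (\<lambda>i. c * r i) = fpot \<gamma> m N r / cmod c"
proof -
  have "\<And>i j. cmod (c * r j - c * r i) = cmod c * cmod (r j - r i)"
    by (metis norm_mult right_diff_distrib)
  then show ?thesis
    unfolding fpot_def sum_divide_distrib using assms
    by (intro sum.cong refl) auto
qed

lemma gmom_scale:
  shows "gmom m N (\<lambda>i. c * r i) = (cmod c)^2 * gmom m N r"
  unfolding gmom_def
  by (simp add: sum_distrib_left norm_mult power_mult_distrib algebra_simps)

lemma traj_eq:
  "traj lam r t = (\<lambda>i. cis (sqrt (2 * lam) * t) * r i)"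
proof
  fix i
  show "traj lam r t i = cis (sqrt (2 * lam) * t) * r i"
  proof (cases "r i = 0")
    case True
    then show ?thesis unfolding traj_def by simp
  next
    case False
    have "traj lam r t i = complex_of_real (cmod (r i)) * cis (Arg (r i)) * cis (sqrt (2 * lam) * t)"
      unfolding traj_def by (simp add: cis_mult mult.assoc)
    also have "complex_of_real (cmod (r i)) * cis (Arg (r i)) = r i"
      using False by (simp add: cis_Arg sgn_div_norm scaleR_conv_of_real field_simps)
    finally show ?thesis by simp
  qed
qed

theorem theorem4p2:
  fixes N :: nat and m :: "nat \<Rightarrow> real" and \<gamma> lam :: real and r :: "nat \<Rightarrow> complex"
  assumes "N \<ge> 2" and "\<forall>i<N. m i > 0" and "\<gamma> > 0" and "lam > 0"
    and "config N r"
    and "\<forall>r'. config N r' \<longrightarrow> fpot \<gamma> m N r + lam * gmom m N r \<le> fpot \<gamma> m N r' + lam * gmom m N r'"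
  shows "\<exists>f_lam g_lam. (\<forall>t\<ge>0. fpot \<gamma> m N (traj lam r t) = f_lam \<and> gmom m N (traj lam r t) = g_lam)
      \<and> f_lam = Cm \<gamma> m N / sqrt g_lam"
proof -
  define g where "g = gmom m N r"
  have gpos: "g > 0"
  proof -
    have "r 0 \<noteq> r 1" using assms(1,5) unfolding config_def by auto
    then obtain k where k: "k < N" "r k \<noteq> 0" using assms(1) by (metis less_2_cases_iff less_le_trans one_less_numeral_iff semiring_norm(76))
    have "0 < m k * (cmod (r k))^2" using k assms(2) by simp
    also have "\<dots> \<le> g" unfolding g_def gmom_def
      by (rule member_le_sum[where f="\<lambda>i. m i * (cmod (r i))^2"]) (use k assms(2) in \<open>auto intro: less_imp_le\<close>)
    finally show ?thesis .
  qed
  define s where "s = sqrt g"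
  have spos: "s > 0" using gpos s_def by simp
  have s2: "s^2 = g" using gpos s_def by simp
  define S where "S = fpot \<gamma> m N ` {r. config N r \<and> gmom m N r = 1}"
  define r0 where "r0 = (\<lambda>i. complex_of_real (1/s) * r i)"
  have "fpot \<gamma> m N r0 = fpot \<gamma> m N r * s"
    unfolding r0_def using spos by (subst fpot_scale) (auto simp: norm_divide)
  moreover have "config N r0" unfolding r0_def using spos assms(5) by (intro config_scale) auto
  moreover have "gmom m N r0 = 1" unfolding r0_def gmom_scale
    using spos s2 gpos by (simp add: g_def[symmetric] power_divide norm_divide)
  ultimately have mem: "fpot \<gamma> m N r * s \<in> S" unfolding S_def by force
  have lb: "fpot \<gamma> m N r * s \<le> x" if xS: "x \<in> S" for x
  proof -
    obtain r' where r': "config N r'" "gmom m N r' = 1" "x = fpot \<gamma> m N r'"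
      using xS unfolding S_def by auto
    define r'' where "r'' = (\<lambda>i. complex_of_real s * r' i)"
    have "config N r''" unfolding r''_def using spos r' by (intro config_scale) auto
    moreover have "gmom m N r'' = g" unfolding r''_def gmom_scale using r' spos s2 by simp
    moreover have "fpot \<gamma> m N r'' = x / s" unfolding r''_def using spos r'
      by (subst fpot_scale) auto
    ultimately have "fpot \<gamma> m N r + lam * g \<le> x / s + lam * g"
      using assms(6) g_def by metis
    then have "fpot \<gamma> m N r \<le> x / s" by simp
    then show ?thesis using spos by (simp add: field_simps)
  qed
  have "Cm \<gamma> m N = fpot \<gamma> m N r * s"
    unfolding Cm_def S_def[symmetric] using mem lb by (intro cInf_eq_minimum)
  then have main: "fpot \<gamma> m N r = Cm \<gamma> m N / sqrt g" using spos s_def by simp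
  have "\<forall>t\<ge>0. fpot \<gamma> m N (traj lam r t) = fpot \<gamma> m N r \<and> gmom m N (traj lam r t) = g"
    unfolding traj_eq g_def by (simp add: fpot_scale gmom_scale)
  then show ?thesis using main by blast
qed

end
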